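(* Let $S$ be a finite nonempty set of positive integers and $s=\max S$. The minimum density of a dominating set in the distance graph $G(S)$ is achieved by a periodic dominating set with period at most $(2s)2^{2s}$.
   Context: The distance graph $G(S)$ has vertex set $\mathbb{Z}$, with $i,j$ adjacent iff $|i-j|\in S$. A set $D\subseteq\mathbb{Z}$ is dominating if every integer is in $D$ or adjacent to an element of $D$. The density of $A\subseteq\mathbb{Z}$ is $\delta(A)=\limsup_{N\to\infty}\frac{|A\cap[-N,N]|}{2N+1}$. A set $A$ is periodic with period $p$ if $A+p=A$. *)

theory Defs
  imports Complex_Main "HOL-Library.Liminf_Limsup" "HOL-Library.Extended_Real"
begin

definition dist_adj :: "nat set \<Rightarrow> int \<Rightarrow> int \<Rightarrow> bool" where
  "dist_adj S i j \<longleftrightarrow> \<bar>i - j\<bar> \<in> int ` S"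

definition dominating :: "nat set \<Rightarrow> int set \<Rightarrow> bool" where
  "dominating S D \<longleftrightarrow> (\<forall>x::int. x \<in> D \<or> (\<exists>d\<in>D. dist_adj S x d))"

definition density :: "int set \<Rightarrow> ereal" where
  "density A = limsup (\<lambda>N::nat. ereal (real (card (A \<inter> {- int N .. int N})) / (2 * real N + 1)))"

definition periodic_with :: "int set \<Rightarrow> int \<Rightarrow> bool" where
  "periodic_with A p \<longleftrightarrow> (\<lambda>x. x + p) ` A = A"

end

theory Submission
  imports Defs
begin

definition Pset :: "int \<Rightarrow> int set \<Rightarrow> int set" where "Pset p B = {x. x mod p \<in> B}"

lemma count_block:
  assumes p: "0 < p" and B: "B \<subseteq> {0..<p}"
  shows "card (Pset p B \<inter> {a..<a+p}) = card B"
proof -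
  have inj: "inj_on (\<lambda>x. x mod p) (Pset p B \<inter> {a..<a+p})"
  proof (rule inj_onI)
    fix x y assume x: "x \<in> Pset p B \<inter> {a..<a+p}" and y: "y \<in> Pset p B \<inter> {a..<a+p}"
      and e: "x mod p = y mod p"
    hence "p dvd x - y" by (simp add: mod_eq_dvd_iff)
    moreover have "\<bar>x - y\<bar> < p" using x y by auto
    ultimately show "x = y" using dvd_imp_le_int[of "x-y" p] p by (cases "x = y") auto
  qed
  have im: "(\<lambda>x. x mod p) ` (Pset p B \<inter> {a..<a+p}) = B"
  proof
    show "(\<lambda>x. x mod p) ` (Pset p B \<inter> {a..<a+p}) \<subseteq> B" by (auto simp: Pset_def)
    show "B \<subseteq> (\<lambda>x. x mod p) ` (Pset p B \<inter> {a..<a+p})"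
    proof
      fix b assume b: "b \<in> B"
      have bm: "b mod p = b" using b B by auto
      have "(a + (b - a) mod p) mod p = b" using bm by (simp add: mod_add_right_eq)
      moreover have "a + (b - a) mod p \<in> {a..<a+p}" using p by auto
      ultimately show "b \<in> (\<lambda>x. x mod p) ` (Pset p B \<inter> {a..<a+p})"
        using b unfolding Pset_def by (intro image_eqI[of _ _ "a + (b - a) mod p"]) auto
    qed
  qed
  show ?thesis using card_image[OF inj] im by simp
qed

lemma count_blocks:
  assumes p: "0 < p" and B: "B \<subseteq> {0..<p}"
  shows "card (Pset p B \<inter> {a..<a+int q*p}) = q * card B"
proof (induction q)
  case 0 then show ?case by simp
next
  case (Suc q)
  have split: "Pset p B \<inter> {a..<a+int (Suc q)*p} = (Pset p B \<inter> {a..<a+int q*p}) \<union> (Pset p B \<inter> {a+int q*p..<a+int q*p+p})"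
  proof -
    have nn: "0 \<le> p * int q" using p by simp
    show ?thesis apply (auto simp: algebra_simps) by (insert nn p, linarith)+
  qed
  have "card (Pset p B \<inter> {a..<a+int (Suc q)*p}) = card (Pset p B \<inter> {a..<a+int q*p}) + card (Pset p B \<inter> {a+int q*p..<a+int q*p+p})"
    unfolding split by (rule card_Un_disjoint) auto
  then show ?case using Suc count_block[OF p B, of "a+int q*p"] by simp
qed
lemma lim_aux: "(\<lambda>N::nat. ereal (a + b / (2 * real N + 1))) \<longlonglongrightarrow> ereal a"
proof -
  have "filterlim (\<lambda>N::nat. 2 * real N + 1) at_top sequentially"
    by (rule filterlim_at_top_mono[OF filterlim_real_sequentially]) auto
  then have "(\<lambda>N::nat. b / (2 * real N + 1)) \<longlonglongrightarrow> 0"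
    by (intro real_tendsto_divide_at_top[OF tendsto_const])
  then have "(\<lambda>N::nat. a + b / (2 * real N + 1)) \<longlonglongrightarrow> a"
    using tendsto_add[OF tendsto_const[of a]] by fastforce
  then show ?thesis by (simp add: lim_ereal)
qed

lemma density_nonneg: "0 \<le> density A"
  unfolding density_def by (rule le_Limsup) auto

lemma density_Pset_le:
  assumes p: "0 < p" and B: "B \<subseteq> {0..<p}"
  shows "density (Pset p B) \<le> ereal (card B / p)"
proof -
  let ?c = "real (card B)"
  have bound: "real (card (Pset p B \<inter> {- int N .. int N})) / (2 * real N + 1) \<le> ?c / p + ?c / (2 * real N + 1)" for N
  proof -
    define n where "n = 2 * int N + 1"
    define q where "q = nat (n div p) + 1"
    have d: "n = n div p * p + n mod p" by simp
    have m1: "n mod p < p" "0 \<le> n mod p" using p by simp_all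
    have d0: "0 \<le> n div p" using p n_def by (simp add: pos_imp_zdiv_nonneg_iff)
    have iq: "int q * p = n div p * p + p" unfolding q_def using d0 by (simp add: algebra_simps)
    have qp: "n < int q * p" using iq d m1 by linarith
    have sub: "Pset p B \<inter> {- int N .. int N} \<subseteq> Pset p B \<inter> {- int N..<- int N + int q * p}"
      using qp n_def by auto
    have "card (Pset p B \<inter> {- int N .. int N}) \<le> q * card B"
      using card_mono[OF _ sub] count_blocks[OF p B, of "- int N" q] by simp
    hence c1: "real (card (Pset p B \<inter> {- int N .. int N})) \<le> real q * ?c"
      by (metis of_nat_le_iff of_nat_mult)
    have "int q * p \<le> n + p" using iq d m1 by linarith
    hence "real_of_int (int q * p) \<le> real_of_int (n + p)" by (simp only: of_int_le_iff)
    hence "real q * p \<le> (2 * real N + 1) + p" unfolding n_def by simp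
    hence "real q \<le> (2 * real N + 1) / p + 1" using p by (simp add: field_simps)
    hence "real q * ?c \<le> ((2 * real N + 1) / p + 1) * ?c" by (simp add: mult_right_mono)
    with c1 have "real (card (Pset p B \<inter> {- int N .. int N})) \<le> ((2 * real N + 1) / p + 1) * ?c" by linarith
    hence "real (card (Pset p B \<inter> {- int N .. int N})) / (2 * real N + 1) \<le> ((2 * real N + 1) / p + 1) * ?c / (2 * real N + 1)"
      by (simp add: divide_right_mono)
    also have "\<dots> = ?c / p + ?c / (2 * real N + 1)" by (simp add: field_simps)
    finally show ?thesis .
  qed
  have "density (Pset p B) \<le> limsup (\<lambda>N::nat. ereal (?c / p + ?c / (2 * real N + 1)))"
    unfolding density_def by (rule Limsup_mono) (use bound in auto)
  also have "\<dots> = ereal (?c / p)" by (rule lim_imp_Limsup, simp, rule lim_aux)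
  finally show ?thesis by simp
qed

lemma density_ge:
  assumes "\<And>n a. r * real n - K \<le> real (card (D \<inter> {a..<a+int n}))"
  shows "ereal r \<le> density D"
proof -
  have bound: "r + (- K) / (2 * real N + 1) \<le> real (card (D \<inter> {- int N .. int N})) / (2 * real N + 1)" for N
  proof -
    have e: "{- int N..<- int N + int (2*N+1)} = {- int N .. int N}" by auto
    have "r * real (2*N+1) - K \<le> real (card (D \<inter> {- int N .. int N}))" using assms[of "2*N+1" "- int N"] e by simp
    hence "(r * real (2*N+1) - K) / (2 * real N + 1) \<le> real (card (D \<inter> {- int N .. int N})) / (2 * real N + 1)"
      by (simp add: divide_right_mono)
    moreover have "(r * real (2*N+1) - K) / (2 * real N + 1) = r + (- K) / (2 * real N + 1)"
      by (simp add: field_simps)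
    ultimately show ?thesis by simp
  qed
  have "ereal r = limsup (\<lambda>N::nat. ereal (r + (- K) / (2 * real N + 1)))"
    by (rule lim_imp_Limsup[symmetric], simp, rule lim_aux)
  also have "\<dots> \<le> density D"
    unfolding density_def by (rule Limsup_mono) (use bound in auto)
  finally show ?thesis .
qed



lemma adj_bound: "finite S \<Longrightarrow> dist_adj S x d \<Longrightarrow> \<bar>x - d\<bar> \<le> int (Max S)"
  unfolding dist_adj_def by auto

lemma Pset_mem: "0 < p \<Longrightarrow> x \<in> Pset p {b\<in>{0..<p}. i + (b - i) mod p \<in> D} \<longleftrightarrow> i + (x - i) mod p \<in> D"
  unfolding Pset_def by (simp add: mod_diff_left_eq)

lemma seg_agree:
  assumes p: "p = j - i" "0 < p"
    and win: "\<And>t. t < 2 * Max S \<Longrightarrow> (i + int t \<in> D \<longleftrightarrow> j + int t \<in> D)"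
  shows "i \<le> x \<Longrightarrow> x < j + 2 * int (Max S) \<Longrightarrow> (x \<in> D \<longleftrightarrow> i + (x - i) mod p \<in> D)"
proof (induction "nat (x - i)" arbitrary: x rule: less_induct)
  case less
  show ?case
  proof (cases "x < j")
    case True
    then have "(x - i) mod p = x - i" using less.prems p by (simp add: mod_pos_pos_trivial)
    then show ?thesis by simp
  next
    case False
    define t where "t = nat (x - j)"
    have t: "t < 2 * Max S" "x = j + int t" using False less.prems unfolding t_def by auto
    have "x \<in> D \<longleftrightarrow> i + int t \<in> D" using win[OF t(1)] t(2) by simp
    also have "\<dots> \<longleftrightarrow> i + (i + int t - i) mod p \<in> D"
    proof (rule less.hyps)
      show "nat (i + int t - i) < nat (x - i)" using t p by simp
      show "i \<le> i + int t" by simp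
      show "i + int t < j + 2 * int (Max S)" using t p by simp
    qed
    also have "(i + int t - i) mod p = (x - i) mod p"
    proof -
      have "x - i = int t + p" using t p by simp
      then show ?thesis by simp
    qed
    finally show ?thesis .
  qed
qed

lemma seg_dom:
  assumes S: "finite S" and D: "dominating S D" and p: "p = j - i" "0 < p"
    and win: "\<And>t. t < 2 * Max S \<Longrightarrow> (i + int t \<in> D \<longleftrightarrow> j + int t \<in> D)"
  defines "B \<equiv> {b\<in>{0..<p}. i + (b - i) mod p \<in> D}"
  shows "dominating S (Pset p B)" "Pset p B \<inter> {i..<j} = D \<inter> {i..<j}"
proof -
  let ?s = "int (Max S)"
  have mem: "x \<in> Pset p B \<longleftrightarrow> i + (x - i) mod p \<in> D" for x
    unfolding B_def using Pset_mem[OF p(2)] .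
  have agr: "i \<le> x \<Longrightarrow> x < j + 2 * ?s \<Longrightarrow> (x \<in> Pset p B \<longleftrightarrow> x \<in> D)" for x
    using seg_agree[OF p win] mem by blast
  show "Pset p B \<inter> {i..<j} = D \<inter> {i..<j}" using agr by auto
  have shift: "p dvd \<delta> \<Longrightarrow> (z + \<delta> \<in> Pset p B \<longleftrightarrow> z \<in> Pset p B)" for z \<delta>
  proof -
    assume "p dvd \<delta>" then obtain k where "\<delta> = p * k" by blast
    then show ?thesis unfolding Pset_def by simp
  qed
  show "dominating S (Pset p B)"
    unfolding dominating_def
  proof
    fix y
    define y' where "y' = i + ?s + (y - i - ?s) mod p"
    have mb: "(y-i-?s) mod p < p" "0 \<le> (y-i-?s) mod p" using p by simp_all
    have y'r: "i + ?s \<le> y'" "y' < j + ?s" unfolding y'_def using p mb by linarith+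
    have dm: "(y-i-?s) div p * p + (y-i-?s) mod p = y-i-?s" by (rule div_mult_mod_eq)
    have "y - y' = (y-i-?s) div p * p" unfolding y'_def using dm by linarith
    then have dv: "p dvd (y - y')" by simp
    from D have "y' \<in> D \<or> (\<exists>d\<in>D. dist_adj S y' d)" unfolding dominating_def by blast
    then show "y \<in> Pset p B \<or> (\<exists>d\<in>Pset p B. dist_adj S y d)"
    proof
      assume "y' \<in> D"
      then have "y' \<in> Pset p B" using agr y'r by auto
      then have "y' + (y - y') \<in> Pset p B" using shift[OF dv] by blast
      then show ?thesis by simp
    next
      assume "\<exists>d\<in>D. dist_adj S y' d"
      then obtain d where d: "d \<in> D" "dist_adj S y' d" by blast
      have "\<bar>y' - d\<bar> \<le> ?s" using adj_bound[OF S d(2)] .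
      then have "d \<in> Pset p B" using agr[of d] y'r d(1) by auto
      then have "d + (y - y') \<in> Pset p B" using shift[OF dv] by blast
      moreover have "dist_adj S y (d + (y - y'))" using d(2) unfolding dist_adj_def
        by (simp add: algebra_simps)
      ultimately show ?thesis by blast
    qed
  qed
qed

lemma cut_dom:
  assumes S: "finite S" and D: "dominating S D" and p: "p = j - i" "0 < p"
    and win: "\<And>t. t < 2 * Max S \<Longrightarrow> (i + int t \<in> D \<longleftrightarrow> j + int t \<in> D)"
  shows "dominating S ({x\<in>D. x < i} \<union> (\<lambda>x. x - p) ` {x\<in>D. j \<le> x})"
proof -
  let ?s = "int (Max S)"
  let ?D' = "{x\<in>D. x < i} \<union> (\<lambda>x. x - p) ` {x\<in>D. j \<le> x}"
  have mem: "z \<in> ?D' \<longleftrightarrow> (z < i \<and> z \<in> D) \<or> (i \<le> z \<and> z + p \<in> D)" for z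
  proof
    assume "z \<in> ?D'" then show "(z < i \<and> z \<in> D) \<or> (i \<le> z \<and> z + p \<in> D)" using p(2) by (auto simp: p(1))
  next
    assume "(z < i \<and> z \<in> D) \<or> (i \<le> z \<and> z + p \<in> D)"
    then show "z \<in> ?D'"
    proof
      assume "i \<le> z \<and> z + p \<in> D"
      then show ?thesis using p by (intro UnI2 image_eqI[of _ _ "z + p"]) auto
    qed auto
  qed
  have lowagr: "z < i + 2 * ?s \<Longrightarrow> (z \<in> ?D' \<longleftrightarrow> z \<in> D)" for z
  proof -
    assume z: "z < i + 2 * ?s"
    show ?thesis
    proof (cases "z < i")
      case True then show ?thesis using mem[of z] by auto
    next
      case False
      define t where "t = nat (z - i)"
      have t: "t < 2 * Max S" "z = i + int t" using False z unfolding t_def by auto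
      have "z + p = j + int t" using t p by simp
      have e1: "z \<in> ?D' \<longleftrightarrow> z + p \<in> D" using mem[of z] False not_less by blast
      have e2: "z + p \<in> D \<longleftrightarrow> z \<in> D" using win[OF t(1)] t(2) \<open>z + p = j + int t\<close> by metis
      show ?thesis using e1 e2 by blast
    qed
  qed
  show ?thesis unfolding dominating_def
  proof
    fix y
    show "y \<in> ?D' \<or> (\<exists>d\<in>?D'. dist_adj S y d)"
    proof (cases "y < i + ?s")
      case True
      from D have "y \<in> D \<or> (\<exists>d\<in>D. dist_adj S y d)" unfolding dominating_def by blast
      then show ?thesis
      proof
        assume "y \<in> D" then show ?thesis using lowagr[of y] True by auto
      next
        assume "\<exists>d\<in>D. dist_adj S y d"
        then obtain d where d: "d \<in> D" "dist_adj S y d" by blast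
        have "\<bar>y - d\<bar> \<le> ?s" using adj_bound[OF S d(2)] .
        then have "d \<in> ?D'" using lowagr[of d] True d(1) by auto
        then show ?thesis using d(2) by blast
      qed
    next
      case False
      from D have "y + p \<in> D \<or> (\<exists>d\<in>D. dist_adj S (y + p) d)" unfolding dominating_def by blast
      then show ?thesis
      proof
        assume "y + p \<in> D" then show ?thesis using mem[of y] False by auto
      next
        assume "\<exists>d\<in>D. dist_adj S (y + p) d"
        then obtain d where d: "d \<in> D" "dist_adj S (y + p) d" by blast
        have "\<bar>y + p - d\<bar> \<le> ?s" using adj_bound[OF S d(2)] .
        then have "d - p \<in> ?D'" using mem[of "d - p"] False d(1) by auto
        moreover have "dist_adj S y (d - p)" using d(2) unfolding dist_adj_def by (simp add: algebra_simps)
        ultimately show ?thesis by blast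
      qed
    qed
  qed
qed



lemma main_count:
  assumes S: "finite S" and r1: "r \<le> 1"
   and seg: "\<And>D i j. dominating S D \<Longrightarrow> i < j \<Longrightarrow> j - i \<le> 2^(2*Max S) \<Longrightarrow>
      (\<And>t. t < 2*Max S \<Longrightarrow> (i + int t \<in> D \<longleftrightarrow> j + int t \<in> D)) \<Longrightarrow>
      r * real_of_int (j - i) \<le> real (card (D \<inter> {i..<j}))"
  shows "dominating S D \<Longrightarrow> r * real n - 2^(2*Max S) \<le> real (card (D \<inter> {a..<a+int n}))"
proof (induction n arbitrary: D a rule: less_induct)
  case (less n)
  define M :: nat where "M = 2^(2*Max S)"
  show ?case
  proof (cases "n \<le> M")
    case True
    have "r * real n \<le> 1 * real n" using r1 by (intro mult_right_mono) auto
    moreover have "real n \<le> real M" using True by (simp only: of_nat_le_iff)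
    moreover have "real M = 2^(2*Max S)" by (simp add: M_def)
    moreover have "0 \<le> real (card (D \<inter> {a..<a + int n}))" by simp
    ultimately show ?thesis by linarith
  next
    case False
    define st where "st x = map (\<lambda>t. x + int t \<in> D) [0..<2*Max S]" for x
    have ninj: "\<not> inj_on st {a..a+int M}"
    proof
      assume inj: "inj_on st {a..a+int M}"
      have sub: "st ` {a..a+int M} \<subseteq> {xs. set xs \<subseteq> UNIV \<and> length xs = 2*Max S}" by (auto simp: st_def)
      have "card {a..a+int M} \<le> card {xs :: bool list. set xs \<subseteq> UNIV \<and> length xs = 2*Max S}"
        by (rule card_inj_on_le[OF inj sub]) (rule finite_lists_length_eq, simp)
      also have "\<dots> = card (UNIV :: bool set) ^ (2*Max S)" by (rule card_lists_length_eq) simp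
      also have "\<dots> = M" unfolding M_def by (simp add: card_UNIV_bool)
      finally show False by simp
    qed
    then obtain x y where xy: "x \<in> {a..a+int M}" "y \<in> {a..a+int M}" "x \<noteq> y" "st x = st y"
      unfolding inj_on_def by blast
    obtain i j where ij: "i \<in> {a..a+int M}" "j \<in> {a..a+int M}" "i < j" "st i = st j"
    proof (cases "x < y")
      case True then show ?thesis using that xy by blast
    next
      case False then show ?thesis using that[of y x] xy by auto
    qed
    have win: "i + int t \<in> D \<longleftrightarrow> j + int t \<in> D" if t: "t < 2*Max S" for t
    proof -
      have "st i ! t = st j ! t" using ij by simp
      then show ?thesis using t by (simp add: st_def)
    qed
    define p where "p = j - i"
    have p: "0 < p" "p \<le> int M" using ij unfolding p_def by auto
    have segb: "r * real_of_int p \<le> real (card (D \<inter> {i..<j}))"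
      unfolding p_def by (rule seg[OF less.prems ij(3)]) (use p win in \<open>auto simp: p_def M_def\<close>)
    define D' where "D' = {x\<in>D. x < i} \<union> (\<lambda>x. x - p) ` {x\<in>D. j \<le> x}"
    have D'dom: "dominating S D'" unfolding D'_def
      by (rule cut_dom[OF S less.prems p_def p(1)]) (rule win)
    define n' where "n' = n - nat p"
    have n'lt: "n' < n" using p False unfolding n'_def by auto
    have n'i: "int n' = int n - p" using p False unfolding n'_def by auto
    have IH: "r * real n' - 2^(2*Max S) \<le> real (card (D' \<inter> {a..<a+int n'}))"
      using less.IH[OF n'lt D'dom] .
    have ai: "a \<le> i" "j \<le> a + int n" using ij False by auto
    have split1: "D \<inter> {a..<a+int n} = (D \<inter> {a..<i}) \<union> (D \<inter> {i..<j}) \<union> (D \<inter> {j..<a+int n})"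
      using ai ij by auto
    have c1: "card (D \<inter> {a..<a+int n}) = card (D \<inter> {a..<i}) + card (D \<inter> {i..<j}) + card (D \<inter> {j..<a+int n})"
    proof -
      have A: "card ((D \<inter> {a..<i}) \<union> (D \<inter> {i..<j}) \<union> (D \<inter> {j..<a+int n})) = card ((D \<inter> {a..<i}) \<union> (D \<inter> {i..<j})) + card (D \<inter> {j..<a+int n})"
        by (rule card_Un_disjoint) (use ij in auto)
      have B: "card ((D \<inter> {a..<i}) \<union> (D \<inter> {i..<j})) = card (D \<inter> {a..<i}) + card (D \<inter> {i..<j})"
        by (rule card_Un_disjoint) auto
      show ?thesis unfolding split1 A B ..
    qed
    have split2: "D' \<inter> {a..<a+int n'} = (D \<inter> {a..<i}) \<union> (\<lambda>x. x - p) ` (D \<inter> {j..<a+int n})"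
      unfolding D'_def n'i using ai p_def by auto
    have injm: "inj_on (\<lambda>x. x - p) (D \<inter> {j..<a+int n})" by (auto simp: inj_on_def)
    have c2: "card (D' \<inter> {a..<a+int n'}) = card (D \<inter> {a..<i}) + card (D \<inter> {j..<a+int n})"
    proof -
      have ci: "card ((\<lambda>x. x - p) ` (D \<inter> {j..<a+int n})) = card (D \<inter> {j..<a+int n})"
        by (rule card_image[OF injm])
      have "card (D \<inter> {a..<i} \<union> (\<lambda>x. x - p) ` (D \<inter> {j..<a+int n})) = card (D \<inter> {a..<i}) + card ((\<lambda>x. x - p) ` (D \<inter> {j..<a+int n}))"
        by (rule card_Un_disjoint) (auto simp: p_def)
      then show ?thesis unfolding split2 ci .
    qed
    have rn: "real n' = real n - real_of_int p" using n'i by (metis of_int_diff of_int_of_nat_eq)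
    have "r * real n = r * real n' + r * real_of_int p" unfolding rn by (simp add: right_diff_distrib)
    then show ?thesis using IH segb c1 c2 by simp
  qed
qed



lemma Pset_periodic: "periodic_with (Pset p B) p"
  unfolding periodic_with_def
proof
  show "(\<lambda>x. x + p) ` Pset p B \<subseteq> Pset p B" by (auto simp: Pset_def)
  show "Pset p B \<subseteq> (\<lambda>x. x + p) ` Pset p B"
  proof
    fix x assume "x \<in> Pset p B"
    then have "x - p \<in> Pset p B" by (simp add: Pset_def mod_diff_left_eq[symmetric])
    then show "x \<in> (\<lambda>x. x + p) ` Pset p B" by (intro image_eqI[of _ _ "x - p"]) auto
  qed
qed

theorem theorem4:
  fixes S :: "nat set"
  assumes "finite S" and "S \<noteq> {}" and "0 \<notin> S"
  shows "\<exists>D p. dominating S D \<and> 0 < p \<and> p \<le> int (2 * Max S * 2 ^ (2 * Max S))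
           \<and> periodic_with D p
           \<and> (\<forall>D'. dominating S D' \<longrightarrow> density D \<le> density D')"
proof -
  define M :: nat where "M = 2^(2*Max S)"
  have s1: "1 \<le> Max S" using assms Max_in[OF assms(1,2)] by (cases "Max S") auto
  have MB: "int M \<le> int (2 * Max S * 2 ^ (2 * Max S))" unfolding M_def using s1 by simp
  define Par where "Par = {(p, B). p \<in> {1..int M} \<and> B \<subseteq> {0..<p} \<and> dominating S (Pset p B)}"
  define C where "C = (\<lambda>(p, B). Pset p B) ` Par"
  have finPar: "finite Par"
    by (rule finite_subset[of _ "Sigma {1..int M} (\<lambda>p. Pow {0..<p})"]) (auto simp: Par_def)
  have "Pset 1 {0} = UNIV" by (auto simp: Pset_def)
  then have "(1, {0}) \<in> Par" unfolding Par_def M_def by (auto simp: dominating_def)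
  then have Cne: "C \<noteq> {}" unfolding C_def by auto
  have finC: "finite (density ` C)" unfolding C_def using finPar by simp
  define c where "c = Min (density ` C)"
  have cin: "c \<in> density ` C" unfolding c_def using finC Cne by (intro Min_in) auto
  have cle: "\<And>P. P \<in> C \<Longrightarrow> c \<le> density P" unfolding c_def using finC by auto
  obtain p0 B0 where pb0: "(p0, B0) \<in> Par" "c = density (Pset p0 B0)"
    using cin unfolding C_def by auto
  have p0: "1 \<le> p0" "p0 \<le> int M" "B0 \<subseteq> {0..<p0}" "dominating S (Pset p0 B0)"
    using pb0(1) unfolding Par_def by auto
  have "card B0 \<le> card {0..<p0}" using p0(3) by (intro card_mono) auto
  then have cB0: "real (card B0) \<le> real_of_int p0" using p0(1) by simp
  have "c \<le> ereal (card B0 / p0)" unfolding pb0(2) using density_Pset_le[of p0 B0] p0 by simp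
  also have "\<dots> \<le> 1" using cB0 p0(1) by simp
  finally have c1: "c \<le> 1" .
  have c0: "0 \<le> c" unfolding pb0(2) by (rule density_nonneg)
  define r where "r = real_of_ereal c"
  have cr: "c = ereal r" unfolding r_def using c0 c1 by (cases c) auto
  have r1: "r \<le> 1" using c1 cr by simp
  have seg: "r * real_of_int (j - i) \<le> real (card (D \<inter> {i..<j}))"
    if D: "dominating S D" and ij: "i < j" "j - i \<le> 2^(2*Max S)"
      and win: "\<And>t. t < 2*Max S \<Longrightarrow> (i + int t \<in> D \<longleftrightarrow> j + int t \<in> D)" for D i j
  proof -
    define p where "p = j - i"
    have p: "0 < p" using ij p_def by simp
    define B where "B = {b\<in>{0..<p}. i + (b - i) mod p \<in> D}"
    have sd: "dominating S (Pset p B)" "Pset p B \<inter> {i..<j} = D \<inter> {i..<j}"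
      using seg_dom[OF assms(1) D p_def p win] unfolding B_def by auto
    have "(p, B) \<in> Par" unfolding Par_def using sd(1) ij p by (auto simp: B_def p_def M_def)
    then have "c \<le> density (Pset p B)" using cle unfolding C_def by force
    have Bs: "B \<subseteq> {0..<p}" by (auto simp: B_def)
    note cle2 = \<open>c \<le> density (Pset p B)\<close>
    also have "density (Pset p B) \<le> ereal (card B / p)" by (rule density_Pset_le[OF p Bs])
    finally have "r \<le> card B / p" using cr by simp
    moreover have "card B = card (D \<inter> {i..<j})"
      using count_block[OF p Bs, of i] sd(2) p_def by simp
    ultimately have "r \<le> card (D \<inter> {i..<j}) / p" by simp
    then show ?thesis using p unfolding p_def by (simp add: field_simps)
  qed
  have opt: "density (Pset p0 B0) \<le> density D'" if D': "dominating S D'" for D'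
  proof -
    have "\<And>n a. r * real n - 2^(2*Max S) \<le> real (card (D' \<inter> {a..<a+int n}))"
      using main_count[OF assms(1) r1 seg D'] by blast
    then have "ereal r \<le> density D'" by (rule density_ge)
    then show ?thesis using pb0(2) cr by simp
  qed
  show ?thesis
    using p0 MB opt Pset_periodic[of p0 B0] by (intro exI[of _ "Pset p0 B0"] exI[of _ p0]) auto
qed

end
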